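(* Let $q$ be a prime power, $r\mid(q-1)$ with $r\ge3$, and $q/2\le\ell\le q-1$. The distance $d$ of the quantum Tamo–Barg code $\mathrm{CSS}(C,C)$ with parameters $q,r,\ell$ satisfies \[ d\leq\left(1-\frac{1}{r}\right)(q-\ell)+5. \]
   Context: $[n]=\{0,\dots,n-1\}$, $\mathbb{F}_q^*=\mathbb{F}_q\setminus\{0\}$. For $S\subseteq\mathbb{Z}_{\ge0}$, $\mathbb{F}_q[X]^S=\{\sum_{i\in S}a_iX^i\}$, $\mathrm{ev}(f)=(f(x))_{x\in\mathbb{F}_q^*}$. Let $S=\{i\in[\ell]:i\not\equiv r-1\pmod r\}\cup\{i\in[q-1]:i\equiv1\pmod r\}$, $C=\mathrm{ev}(\mathbb{F}_q[X]^S)\subseteq\mathbb{F}_q^{q-1}$; for $\ell\ge q/2$, $C^\perp\subseteq C$ and the quantum Tamo–Barg code is the CSS code $\mathrm{CSS}(C,C)=\mathrm{span}\{\sum_{y\in C^\perp}|x+y\rangle:x\in C\}$. Its distance is $\min\{|c|:c\in C\setminus C^\perp\}$, where $|c|$ is the Hamming weight (equivalently, the largest $d$ such that every code state can be recovered after erasing any fewer than $d$ qudits). *)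

theory Defs
  imports "HOL-Computational_Algebra.Polynomial"
begin

text \<open>The finite field F_q is a type 'a of class {finite, field}; q = CARD('a).
  Vectors in F_q^{q-1}, indexed by F_q^*, are functions 'a => 'a that vanish at 0.\<close>

definition TB_S :: "nat \<Rightarrow> nat \<Rightarrow> nat \<Rightarrow> nat set" where
  "TB_S q r l = {i. i < l \<and> i mod r \<noteq> r - 1} \<union> {i. i < q - 1 \<and> i mod r = 1 mod r}"

definition ev :: "'a::field poly \<Rightarrow> ('a \<Rightarrow> 'a)" where
  "ev p = (\<lambda>x. if x = 0 then 0 else poly p x)"

definition TB_code :: "'a::{finite,field} itself \<Rightarrow> nat \<Rightarrow> nat \<Rightarrow> ('a \<Rightarrow> 'a) set" where
  "TB_code _ r l = {ev p | p :: 'a poly. \<forall>i. coeff p i \<noteq> 0 \<longrightarrow> i \<in> TB_S (card (UNIV :: 'a set)) r l}"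

definition dual_code :: "('a::{finite,field} \<Rightarrow> 'a) set \<Rightarrow> ('a \<Rightarrow> 'a) set" where
  "dual_code D = {y. y 0 = 0 \<and> (\<forall>c\<in>D. (\<Sum>x\<in>{x. x \<noteq> 0}. c x * y x) = 0)}"

definition hweight :: "('a::{finite,field} \<Rightarrow> 'a) \<Rightarrow> nat" where
  "hweight c = card {x. x \<noteq> 0 \<and> c x \<noteq> 0}"

text \<open>Distance of the quantum Tamo--Barg code CSS(C,C): min weight of C minus its dual.\<close>
definition qTB_distance :: "'a::{finite,field} itself \<Rightarrow> nat \<Rightarrow> nat \<Rightarrow> nat" where
  "qTB_distance T r l = Min (hweight ` (TB_code T r l - dual_code (TB_code T r l)))"

end

theory Submission
  imports Defs
begin


lemma card_ge2: "card (UNIV::'a::{finite,field} set) \<ge> 2"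
proof -
  have "card {0::'a, 1} \<le> card (UNIV::'a set)" by (rule card_mono) auto
  thus ?thesis by simp
qed

lemma card_zero: "of_nat (card (UNIV::'a::{finite,field} set)) = (0::'a)"
proof -
  have b: "bij_betw (\<lambda>x::'a. x + 1) UNIV UNIV"
    unfolding bij_betw_def inj_on_def by (auto intro!: image_eqI[where x="_ - 1"])
  have "(\<Sum>x\<in>UNIV. x + 1) = (\<Sum>x\<in>UNIV. (x::'a))"
    using sum.reindex_bij_betw[OF b, of id] by simp
  thus ?thesis by (simp add: sum.distrib)
qed

lemma card_nz: "card {x::'a::{finite,field}. x \<noteq> 0} = card (UNIV::'a set) - 1"
proof -
  have "{x::'a. x \<noteq> 0} = UNIV - {0}" by auto
  thus ?thesis by (simp add: card_Diff_singleton)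
qed

lemma pow_n:
  fixes x :: "'a::{finite,field}"
  assumes "x \<noteq> 0" shows "x ^ (card (UNIV::'a set) - 1) = 1"
proof -
  let ?U = "{z::'a. z \<noteq> 0}"
  have b: "bij_betw (\<lambda>z. x * z) ?U ?U"
    unfolding bij_betw_def inj_on_def using assms
    by (auto intro!: image_eqI[where x="_ / x"])
  have "(\<Prod>z\<in>?U. x * z) = (\<Prod>z\<in>?U. z)"
    using prod.reindex_bij_betw[OF b, of id] by simp
  hence "x ^ card ?U * (\<Prod>z\<in>?U. z) = 1 * (\<Prod>z\<in>?U. z)"
    by (simp add: prod.distrib)
  moreover have "(\<Prod>z\<in>?U. z) \<noteq> 0" by simp
  ultimately have "x ^ card ?U = 1" by (metis mult_right_cancel)
  thus ?thesis by (simp add: card_nz)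
qed

lemma roots_bound:
  fixes c :: "'a::field"
  assumes "k > 0" "finite {x::'a. x ^ k = c}"
  shows "card {x::'a. x ^ k = c} \<le> k"
proof -
  let ?p = "monom (1::'a) k - [:c:]"
  have ck: "coeff ?p k = 1" using assms by (cases k) auto
  hence nz: "?p \<noteq> 0" by (metis coeff_0 zero_neq_one)
  have dg: "degree ?p \<le> k"
    by (rule order.trans[OF degree_diff_le]) (auto simp: degree_monom_le)
  have "{x::'a. x ^ k = c} = {x. poly ?p x = 0}" by (auto simp: poly_monom)
  with card_poly_roots_bound[OF nz] dg show ?thesis by simp
qed

lemma psum:
  assumes "0 < i" "i < card (UNIV::'a set) - 1"
  shows "(\<Sum>x\<in>{x::'a::{finite,field}. x \<noteq> 0}. x ^ i) = 0"
proof -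
  let ?U = "{z::'a. z \<noteq> 0}"
  obtain a :: 'a where a: "a \<noteq> 0" "a ^ i \<noteq> 1"
  proof (rule ccontr)
    assume "\<not> thesis"
    with that have "?U \<subseteq> {x. x ^ i = 1}" by blast
    hence "card ?U \<le> card {x::'a. x ^ i = 1}" by (intro card_mono) auto
    also have "\<dots> \<le> i" using assms by (intro roots_bound) auto
    finally show False using assms by (simp add: card_nz)
  qed
  have b: "bij_betw (\<lambda>z. a * z) ?U ?U"
    unfolding bij_betw_def inj_on_def using a
    by (auto intro!: image_eqI[where x="_ / a"])
  have "(\<Sum>z\<in>?U. (a * z) ^ i) = (\<Sum>z\<in>?U. z ^ i)"
    using sum.reindex_bij_betw[OF b, of "\<lambda>z. z ^ i"] by simp
  hence "a ^ i * (\<Sum>z\<in>?U. z ^ i) = 1 * (\<Sum>z\<in>?U. z ^ i)"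
    by (simp add: power_mult_distrib sum_distrib_left)
  with a show ?thesis by (metis mult_right_cancel)
qed

lemma sum_poly:
  fixes P :: "'a::{finite,field} poly"
  assumes "\<And>i. coeff P i \<noteq> 0 \<Longrightarrow> i < card (UNIV::'a set) - 1"
  shows "(\<Sum>x\<in>{x::'a. x \<noteq> 0}. poly P x) = - coeff P 0"
proof -
  define n where "n = card (UNIV::'a set) - 1"
  have n1: "n \<ge> 1" using card_ge2[where 'a='a] by (simp add: n_def)
  have dg: "degree P < n"
  proof (cases "P = 0")
    case True thus ?thesis using n1 by simp
  next
    case False thus ?thesis using assms[of "degree P"] by (simp add: n_def)
  qed
  have pe: "poly P x = (\<Sum>i<n. coeff P i * x ^ i)" for x
  proof -
    have "poly P x = (\<Sum>i\<le>degree P. coeff P i * x ^ i)" by (rule poly_altdef)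
    also have "\<dots> = (\<Sum>i<n. coeff P i * x ^ i)"
      using dg by (intro sum.mono_neutral_left) (auto simp: coeff_eq_0)
    finally show ?thesis .
  qed
  have "(\<Sum>x\<in>{x::'a. x \<noteq> 0}. poly P x) = (\<Sum>i<n. coeff P i * (\<Sum>x\<in>{x::'a. x \<noteq> 0}. x ^ i))"
    by (simp add: pe sum_distrib_left sum.swap[of _ "{x::'a. x \<noteq> 0}"])
  also have "\<dots> = (\<Sum>i<n. if i = 0 then coeff P 0 * of_nat n else 0)"
  proof (rule sum.cong)
    fix i assume "i \<in> {..<n}"
    thus "coeff P i * (\<Sum>x\<in>{x::'a. x \<noteq> 0}. x ^ i) = (if i = 0 then coeff P 0 * of_nat n else 0)"
      using psum[of i, where 'a='a] by (auto simp: card_nz n_def)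
  qed simp
  also have "\<dots> = coeff P 0 * of_nat n" using n1 by simp
  also have "of_nat n = (-1::'a)"
  proof -
    have "of_nat (n + 1) = (0::'a)" using card_zero[where 'a='a] n1 by (simp add: n_def)
    thus ?thesis by (simp add: eq_neg_iff_add_eq_0 add.commute)
  qed
  finally show ?thesis by simp
qed



definition expand :: "'a::comm_semiring_1 poly \<Rightarrow> nat \<Rightarrow> nat \<Rightarrow> 'a poly" where
  "expand B r s = (\<Sum>k\<le>degree B. monom (coeff B k) (r*k+s))"

lemma poly_expand: "poly (expand B r s) x = x ^ s * poly B (x ^ r)"
proof -
  have "poly (expand B r s) x = (\<Sum>k\<le>degree B. coeff B k * x^(r*k+s))"
    by (simp add: expand_def poly_sum poly_monom)
  also have "\<dots> = x^s * (\<Sum>k\<le>degree B. coeff B k * (x^r)^k)"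
    by (simp add: sum_distrib_left power_add flip: power_mult) (simp add: mult_ac)
  also have "\<dots> = x ^ s * poly B (x ^ r)" by (simp add: poly_altdef)
  finally show ?thesis .
qed

lemma coeff_expand:
  assumes "coeff (expand B r s) i \<noteq> 0"
  shows "\<exists>k\<le>degree B. i = r*k+s"
proof (rule ccontr)
  assume "\<not> ?thesis"
  hence "coeff (expand B r s) i = 0"
    by (auto simp: expand_def coeff_sum coeff_monom intro!: sum.neutral)
  with assms show False by simp
qed

lemma coeff_mult_support:
  fixes Q p :: "'a::comm_semiring_1 poly"
  assumes "\<And>i. coeff Q i \<noteq> 0 \<Longrightarrow> r dvd i" "\<And>j. coeff p j \<noteq> 0 \<Longrightarrow> j \<le> d"
    "coeff (Q*p) i \<noteq> 0"
  shows "i mod r \<le> d"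
proof -
  obtain k where k: "k \<le> i" "coeff Q k * coeff p (i - k) \<noteq> 0"
    using assms(3) unfolding coeff_mult by (meson atMost_iff sum.neutral)
  hence "coeff Q k \<noteq> 0" "coeff p (i - k) \<noteq> 0" by auto
  hence "r dvd k" "i - k \<le> d" using assms(1,2) by auto
  then obtain j where "k = r*j" by blast
  hence e: "i = (i - k) + j * r" using k(1) by simp
  have "i mod r = ((i - k) + j * r) mod r" using arg_cong[OF e, of "\<lambda>x. x mod r"] .
  hence "i mod r = (i - k) mod r" by simp
  also have "\<dots> \<le> i - k" by simp
  finally show ?thesis using \<open>i - k \<le> d\<close> by simp
qed

lemma fibers:
  assumes "r dvd card (UNIV::'a::{finite,field} set) - 1" "r > 0"
  shows "card ((\<lambda>x::'a. x^r) ` {x. x \<noteq> 0}) = (card (UNIV::'a set) - 1) div r"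
    and "\<forall>y\<in>(\<lambda>x::'a. x^r) ` {x. x \<noteq> 0}. card {x::'a. x \<noteq> 0 \<and> x^r = y} = r"
proof -
  define n where "n = card (UNIV::'a set) - 1"
  define m where "m = n div r"
  define P where "P = (\<lambda>x::'a. x^r) ` {x. x \<noteq> 0}"
  define fib where "fib y = {x::'a. x \<noteq> 0 \<and> x^r = y}" for y
  have n1: "n \<ge> 1" using card_ge2[where 'a='a] by (simp add: n_def)
  have nm: "n = r * m" using assms by (simp add: n_def m_def)
  hence m0: "m > 0" using n1 by (cases m) auto
  have fle: "card (fib y) \<le> r" for y
  proof -
    have "card (fib y) \<le> card {x::'a. x^r = y}" by (rule card_mono) (auto simp: fib_def)
    also have "\<dots> \<le> r" using assms by (intro roots_bound) auto
    finally show ?thesis .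
  qed
  have Ple: "card P \<le> m"
  proof -
    have "P \<subseteq> {y. y ^ m = 1}"
    proof
      fix y assume "y \<in> P"
      then obtain x :: 'a where "x \<noteq> 0" "y = x^r" by (auto simp: P_def)
      hence "y ^ m = x ^ n" by (simp add: nm power_mult)
      also have "\<dots> = 1" using pow_n[OF \<open>x \<noteq> 0\<close>] by (simp add: n_def)
      finally show "y \<in> {y. y ^ m = 1}" by simp
    qed
    hence "card P \<le> card {y::'a. y ^ m = 1}" by (intro card_mono) auto
    also have "\<dots> \<le> m" using m0 by (intro roots_bound) auto
    finally show ?thesis .
  qed
  have U: "{x::'a. x \<noteq> 0} = (\<Union>y\<in>P. fib y)" by (auto simp: P_def fib_def)
  have "n = card (\<Union>y\<in>P. fib y)" using U card_nz[where 'a='a] by (simp add: n_def)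
  also have "\<dots> = (\<Sum>y\<in>P. card (fib y))"
    by (rule card_UN_disjoint) (auto simp: fib_def)
  finally have ns: "n = (\<Sum>y\<in>P. card (fib y))" .
  have "(\<Sum>y\<in>P. card (fib y)) \<le> (\<Sum>y\<in>P. r)" by (rule sum_mono) (rule fle)
  hence sle: "n \<le> r * card P" using ns by (simp add: mult.commute)
  have "m \<le> card P" using sle nm assms(2) by simp
  with Ple have Pm: "card P = m" by simp
  show "card ((\<lambda>x::'a. x^r) ` {x. x \<noteq> 0}) = (card (UNIV::'a set) - 1) div r"
    using Pm by (simp add: P_def m_def n_def)
  show "\<forall>y\<in>(\<lambda>x::'a. x^r) ` {x. x \<noteq> 0}. card {x::'a. x \<noteq> 0 \<and> x^r = y} = r"
  proof (rule ccontr)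
    assume "\<not> ?thesis"
    then obtain y where y: "y \<in> P" "card (fib y) \<noteq> r" by (auto simp: P_def fib_def)
    hence lt: "card (fib y) < r" using fle[of y] by simp
    have "n = card (fib y) + (\<Sum>z\<in>P - {y}. card (fib z))"
      using ns y(1) by (simp add: sum.remove)
    also have "(\<Sum>z\<in>P - {y}. card (fib z)) \<le> (\<Sum>z\<in>P - {y}. r)" by (rule sum_mono) (rule fle)
    also have "\<dots> = r * (card P - 1)" using y(1) by simp
    finally have "n < r + r * (card P - 1)" using lt by simp
    also have "r + r * (card P - 1) = r * card P" using Pm m0
      by (cases "card P") auto
    finally show False using Pm nm by simp
  qed
qed



theorem corollary6p1:
  fixes r l :: nat
  assumes "r dvd card (UNIV :: 'a::{finite,field} set) - 1"
    and "r \<ge> 3"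
    and "real (card (UNIV :: 'a set)) / 2 \<le> real l"
    and "l \<le> card (UNIV :: 'a set) - 1"
  shows "real (qTB_distance TYPE('a) r l)
           \<le> (1 - 1 / real r) * (real (card (UNIV :: 'a set)) - real l) + 5"
proof -
  define q where "q = card (UNIV::'a set)"
  define n where "n = q - 1"
  define m where "m = n div r"
  define t where "t = (l - 1) div r"
  define s where "s = (l - 1) mod r"
  define d where "d = min s (r - 2)"
  define P where "P = (\<lambda>x::'a. x^r) ` {x. x \<noteq> 0}"
  define fib where "fib y = {x::'a. x \<noteq> 0 \<and> x^r = y}" for y
  have q2: "q \<ge> 2" using card_ge2[where 'a='a] by (simp add: q_def)
  have r0: "r > 0" using assms(2) by simp
  have nm: "n = r*m" using assms(1) by (simp add: n_def m_def q_def)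
  have l1: "l \<ge> 1"
  proof -
    have "real q \<ge> 2" using q2 by simp
    hence "real l \<ge> 1" using assms(3) unfolding q_def by linarith
    thus ?thesis by simp
  qed
  have ln: "l \<le> n" using assms(4) by (simp add: n_def q_def)
  have lts: "l - 1 = r*t + s" by (simp add: t_def s_def)
  have sr: "s < r" using r0 by (simp add: s_def)
  have tm: "t < m"
  proof -
    have "r*t < r*m" using lts ln l1 nm by linarith
    thus ?thesis by simp
  qed
  have Pm: "card P = m" using fibers(1)[OF assms(1) r0] by (simp add: P_def m_def n_def q_def)
  have fibr: "card (fib y) = r" if "y \<in> P" for y
    using fibers(2)[OF assms(1) r0] that unfolding P_def fib_def by blast
  have finP: "finite P" by simp
  have P0: "0 \<notin> P" using r0 by (auto simp: P_def)
  obtain T where T: "T \<subseteq> P" "card T = t" "finite T"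
    using obtain_subset_with_card_n[of t P] Pm tm by auto
  have cPT: "card (P - T) = m - t" using T Pm by (simp add: card_Diff_subset)
  hence "P - T \<noteq> {}" using tm by (intro notI) simp
  then obtain y0 where y0: "y0 \<in> P" "y0 \<notin> T" by blast
  have "d \<le> card (fib y0)" using fibr[OF y0(1)] by (simp add: d_def)
  then obtain D where D: "D \<subseteq> fib y0" "card D = d" "finite D"
    using obtain_subset_with_card_n[of d "fib y0"] by auto
  define G where "G = (\<Prod>y\<in>T. [:-y, 1:])"
  define Q where "Q = expand G r 0"
  define pp where "pp = (\<Prod>a\<in>D. [:-a, 1:])"
  define A where "A = Q * pp"
  define R where "R = P - T - {y0}"
  define xr where "xr (y::'a) = (SOME x::'a. x \<noteq> 0 \<and> x^r = y)" for y
  have xr: "xr y \<noteq> 0 \<and> xr y ^ r = y" if "y \<in> P" for y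
  proof -
    have "\<exists>x::'a. x \<noteq> 0 \<and> x^r = y" using that by (auto simp: P_def)
    thus ?thesis unfolding xr_def by (rule someI_ex)
  qed
  define \<beta> where "\<beta> y = (if y \<in> R then - poly A (xr y) / xr y else 0)" for y
  define L where "L c = (\<Prod>c'\<in>P - {c}. smult (inverse (c - c')) [:-c', 1:])" for c
  define B where "B = (\<Sum>c\<in>P. smult (\<beta> c) (L c))"
  define F where "F = A + expand B r 1"
  define f where "f = ev F"

  have polyL: "poly (L c) y = (if y = c then 1 else 0)" if "c \<in> P" "y \<in> P" for c y
  proof (cases "y = c")
    case True
    have "poly (L c) c = 1" unfolding L_def poly_prod
    proof (rule prod.neutral, rule ballI)
      fix c' assume "c' \<in> P - {c}"
      hence "c - c' \<noteq> 0" by auto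
      have e: "poly (smult (inverse (c - c')) [:- c', 1:]) c = inverse (c - c') * (c - c')" by (simp add: algebra_simps)
      show "poly (smult (inverse (c - c')) [:- c', 1:]) c = 1"
        unfolding e using \<open>c - c' \<noteq> 0\<close> by (rule left_inverse)
    qed
    thus ?thesis using True by simp
  next
    case False
    have "y \<in> P - {c}" using False that by simp
    thus ?thesis using False unfolding L_def poly_prod
      by (auto intro!: prod_zero_iff[THEN iffD2] simp: finP)
  qed
  have polyB: "poly B y = \<beta> y" if "y \<in> P" for y
  proof -
    have "poly B y = (\<Sum>c\<in>P. if y = c then \<beta> c else 0)"
      unfolding B_def poly_sum poly_smult using that polyL by (intro sum.cong) auto
    also have "\<dots> = \<beta> y" using that finP by (simp add: sum.delta)
    finally show ?thesis .
  qed
  have degB: "degree B \<le> m - 1"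
    unfolding B_def
  proof (rule degree_sum_le)
    fix c assume c: "c \<in> P"
    have "degree (L c) \<le> (\<Sum>c'\<in>P - {c}. degree (smult (inverse (c - c')) [:-c', 1:]))"
      unfolding L_def using degree_prod_sum_le[where S="P - {c}" and f="\<lambda>c'. smult (inverse (c - c')) [:-c', 1:]"] finP
      unfolding o_def by blast
    also have "\<dots> \<le> (\<Sum>c'\<in>P - {c}. 1)"
      by (intro sum_mono) (auto intro: order.trans[OF degree_smult_le])
    also have "\<dots> = m - 1" using c Pm by simp
    finally show "degree (smult (\<beta> c) (L c)) \<le> m - 1"
      by (rule order.trans[OF degree_smult_le])
  qed simp
  have degpp: "degree pp \<le> d"
  proof -
    have "degree pp \<le> (\<Sum>a\<in>D. degree [:-a, 1:])"
      unfolding pp_def using degree_prod_sum_le[where S=D and f="\<lambda>a. [:-a, 1:]"] D(3) unfolding o_def by blast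
    also have "\<dots> = d" using D by simp
    finally show ?thesis .
  qed
  have degG: "degree G \<le> t"
  proof -
    have "degree G \<le> (\<Sum>y\<in>T. degree [:-y, 1:])"
      unfolding G_def using degree_prod_sum_le[where S=T and f="\<lambda>a. [:-a, 1:]"] T(3) unfolding o_def by blast
    also have "\<dots> = t" using T by simp
    finally show ?thesis .
  qed
  have degQ: "degree Q \<le> r * t"
    unfolding Q_def expand_def
  proof (rule degree_sum_le)
    fix k assume "k \<in> {..degree G}"
    hence "r * k \<le> r * t" using degG by simp
    thus "degree (monom (coeff G k) (r * k + 0)) \<le> r * t"
      by (intro order.trans[OF degree_monom_le]) simp
  qed simp
  have suppQ: "r dvd i" if "coeff Q i \<noteq> 0" for i
    using coeff_expand[OF that[unfolded Q_def]] by auto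
  have supppp: "j \<le> d" if "coeff pp j \<noteq> 0" for j
    using le_degree[OF that] degpp by simp

  have inS: "i \<in> TB_S q r l" if "coeff F i \<noteq> 0" for i
  proof -
    have "coeff A i \<noteq> 0 \<or> coeff (expand B r 1) i \<noteq> 0" using that by (auto simp: F_def)
    thus ?thesis
    proof
      assume a: "coeff A i \<noteq> 0"
      have im: "i mod r \<le> d"
        using coeff_mult_support[of Q r pp d i] suppQ supppp a by (auto simp: A_def)
      have "i \<le> degree A" using le_degree[OF a] .
      also have "\<dots> \<le> degree Q + degree pp" unfolding A_def by (rule degree_mult_le)
      also have "\<dots> \<le> r * t + d" using degQ degpp by simp
      finally have "i < l" using lts l1 by (simp add: d_def)
      moreover have "i mod r \<noteq> r - 1" using im assms(2) unfolding d_def by linarith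
      ultimately show ?thesis by (simp add: TB_S_def)
    next
      assume b: "coeff (expand B r 1) i \<noteq> 0"
      obtain k where k: "k \<le> degree B" "i = r*k+1" using coeff_expand[OF b] by blast
      have "r * k \<le> r * (m - 1)" using k degB by simp
      also have "\<dots> = n - r" using nm by (simp add: right_diff_distrib')
      finally have "r * k \<le> n - r" .
      moreover have "r \<le> n" using nm tm by simp
      ultimately have "i < q - 1" using k assms(2) unfolding n_def by linarith
      moreover have "i mod r = 1 mod r"
      proof -
        have e: "i = 1 + k * r" using k by simp
        show ?thesis by (simp only: e mod_mult_self1)
      qed
      ultimately show ?thesis by (simp add: TB_S_def)
    qed
  qed
  have fC: "f \<in> TB_code TYPE('a) r l"
    unfolding TB_code_def f_def using inS by (auto simp: q_def)
  have oneC: "ev 1 \<in> TB_code TYPE('a) r l"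
  proof -
    have "0 \<in> TB_S q r l" using l1 assms(2) by (simp add: TB_S_def)
    hence "\<forall>i. coeff (1::'a poly) i \<noteq> 0 \<longrightarrow> i \<in> TB_S q r l" by (simp add: coeff_1)
    thus ?thesis unfolding TB_code_def q_def by blast
  qed
  have TP: "y \<in> P" if "y \<in> T" for y using T that by auto
  have coeffF0: "coeff F 0 \<noteq> 0"
  proof -
    have e0: "coeff (expand B r 1) 0 = 0"
    proof (rule ccontr)
      assume "coeff (expand B r 1) 0 \<noteq> 0"
      from coeff_expand[OF this] show False by auto
    qed
    have "coeff Q 0 = poly G 0"
      using poly_expand[of G r 0 0] r0 by (simp add: Q_def poly_0_coeff_0 zero_power del: poly_0_coeff_0[symmetric])
    also have "poly G 0 = (\<Prod>y\<in>T. - y)" by (simp add: G_def poly_prod)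
    also have "\<dots> \<noteq> 0" using T(3) TP P0 by auto
    finally have Q0: "coeff Q 0 \<noteq> 0" .
    have "coeff pp 0 = poly pp 0" by (simp add: poly_0_coeff_0)
    also have "\<dots> = (\<Prod>a\<in>D. - a)" by (simp add: pp_def poly_prod)
    also have "\<dots> \<noteq> 0" using D by (auto simp: fib_def)
    finally have "coeff pp 0 \<noteq> 0" .
    with Q0 e0 show ?thesis by (simp add: F_def A_def coeff_mult)
  qed
  have notdual: "f \<notin> dual_code (TB_code TYPE('a) r l)"
  proof
    assume "f \<in> dual_code (TB_code TYPE('a) r l)"
    hence "(\<Sum>x\<in>{x. x \<noteq> 0}. ev 1 x * f x) = 0" using oneC unfolding dual_code_def by blast
    moreover have "(\<Sum>x\<in>{x. x \<noteq> 0}. ev 1 x * f x) = (\<Sum>x\<in>{x::'a. x \<noteq> 0}. poly F x)"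
      by (rule sum.cong) (auto simp: ev_def f_def)
    moreover have "(\<Sum>x\<in>{x::'a. x \<noteq> 0}. poly F x) = - coeff F 0"
    proof (rule sum_poly)
      fix i assume "coeff F i \<noteq> 0"
      hence "i \<in> TB_S q r l" by (rule inS)
      thus "i < card (UNIV::'a set) - 1" using ln by (auto simp: TB_S_def q_def n_def)
    qed
    ultimately show False using coeffF0 by simp
  qed

  define Zs where "Zs = (\<Union>y\<in>T. fib y) \<union> D \<union> xr ` R"
  have fx: "f x = poly A x + x * poly B (x^r)" if "x \<noteq> 0" for x
    using that by (simp add: f_def ev_def F_def poly_expand)
  have polyA: "poly A x = poly G (x^r) * poly pp x" for x
    by (simp add: A_def Q_def poly_expand)
  have Zs0: "x \<noteq> 0 \<and> f x = 0" if xZ: "x \<in> Zs" for x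
  proof -
    consider (a) y where "y \<in> T" "x \<in> fib y" | (b) "x \<in> D" | (c) y where "y \<in> R" "x = xr y"
      using xZ unfolding Zs_def by blast
    thus ?thesis
    proof cases
      case (a y)
      hence x: "x \<noteq> 0" "x^r = y" by (auto simp: fib_def)
      have "poly G y = 0" using a T(3) by (auto simp: G_def poly_prod)
      moreover have "\<beta> y = 0" using a by (simp add: \<beta>_def R_def)
      ultimately show ?thesis using x fx polyA polyB TP a(1) by simp
    next
      case b
      hence x: "x \<noteq> 0" "x^r = y0" using D by (auto simp: fib_def)
      have "poly pp x = 0" using b D(3) by (auto simp: pp_def poly_prod)
      moreover have "\<beta> y0 = 0" by (simp add: \<beta>_def R_def)
      ultimately show ?thesis using x fx polyA polyB y0 by simp
    next
      case (c y)
      hence yP: "y \<in> P" by (simp add: R_def)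
      from xr[OF yP] c have x: "x \<noteq> 0" "x^r = y" by auto
      have "f x = poly A x + x * (- poly A x / x)"
        using fx[OF x(1)] polyB[OF yP] c x by (simp add: \<beta>_def)
      also have "\<dots> = 0" using x by simp
      finally show ?thesis using x by simp
    qed
  qed
  have c1: "card (\<Union>y\<in>T. fib y) = r * t"
  proof -
    have "card (\<Union>y\<in>T. fib y) = (\<Sum>y\<in>T. card (fib y))"
      using T(3) by (intro card_UN_disjoint) (auto simp: fib_def)
    also have "\<dots> = (\<Sum>y\<in>T. r)" using TP fibr by simp
    finally show ?thesis using T by simp
  qed
  have cR: "card R = m - t - 1" using cPT y0 by (simp add: R_def)
  have c2: "card (xr ` R) = m - t - 1"
  proof -
    have "inj_on xr R"
    proof (rule inj_onI)
      fix y1 y2 assume "y1 \<in> R" "y2 \<in> R" "xr y1 = xr y2"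
      thus "y1 = y2" using xr[of y1] xr[of y2] by (metis DiffD1 R_def)
    qed
    thus ?thesis using cR by (simp add: card_image)
  qed
  have d1: "(\<Union>y\<in>T. fib y) \<inter> D = {}" using D y0 by (auto simp: fib_def)
  have d2: "((\<Union>y\<in>T. fib y) \<union> D) \<inter> xr ` R = {}"
  proof -
    have "y \<in> R \<Longrightarrow> xr y \<notin> (\<Union>y\<in>T. fib y) \<union> D" for y
      using xr[of y] D by (auto simp: R_def fib_def)
    thus ?thesis by blast
  qed
  have cZs: "card Zs = r * t + d + (m - t - 1)"
    unfolding Zs_def using d1 d2 c1 c2 D by (simp add: card_Un_disjoint)
  define hw where "hw = hweight f"
  have hw: "hw + card Zs \<le> n"
  proof -
    have Z: "Zs \<subseteq> {x. x \<noteq> 0 \<and> f x = 0}" using Zs0 by blast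
    have "{x::'a. x \<noteq> 0} = {x. x \<noteq> 0 \<and> f x \<noteq> 0} \<union> {x. x \<noteq> 0 \<and> f x = 0}" by auto
    hence "n = card {x. x \<noteq> 0 \<and> f x \<noteq> 0} + card {x. x \<noteq> 0 \<and> f x = 0}"
      using card_nz[where 'a='a] by (simp add: n_def q_def card_Un_disjoint disjoint_iff)
    moreover have "card Zs \<le> card {x. x \<noteq> 0 \<and> f x = 0}" using Z by (intro card_mono) auto
    ultimately show ?thesis by (simp add: hw_def hweight_def)
  qed
  have dist: "qTB_distance TYPE('a) r l \<le> hw"
    unfolding qTB_distance_def hw_def
    by (rule Min_le) (use fC notdual in auto)
  have key: "(r - 1) * s \<le> r * (d + 4)"
  proof (cases "s \<le> r - 2")
    case True
    hence "d = s" by (simp add: d_def)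
    have "(r - 1) * s \<le> r * (s + 4)" by (intro mult_le_mono) auto
    thus ?thesis using \<open>d = s\<close> by simp
  next
    case False
    hence "s = r - 1" "d = r - 2" using sr by (auto simp: d_def)
    have "(r - 1) * (r - 1) \<le> r * r" by (intro mult_le_mono) auto
    also have "\<dots> \<le> r * (r - 2 + 4)" by (intro mult_le_mono) auto
    finally show ?thesis using \<open>s = r - 1\<close> \<open>d = r - 2\<close> by simp
  qed
  have tm1: "t + 1 \<le> m" using tm by simp
  have h1: "real hw + real r * real t + real d + (real m - real t - 1) \<le> real r * real m"
  proof -
    have "hw + r * t + d + (m - t - 1) \<le> r * m" using hw cZs nm by simp
    hence "real (hw + r * t + d + (m - t - 1)) \<le> real (r * m)" by (simp only: of_nat_le_iff)
    thus ?thesis using tm1 by (simp add: of_nat_diff)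
  qed
  have h2: "real l = real r * real t + real s + 1"
  proof -
    have "l = r * t + s + 1" using lts l1 by simp
    thus ?thesis by (simp only: of_nat_add of_nat_mult of_nat_1)
  qed
  have h3: "real q = real r * real m + 1"
  proof -
    have "q = r * m + 1" using nm q2 by (simp add: n_def)
    thus ?thesis by (simp only: of_nat_add of_nat_mult of_nat_1)
  qed
  have h4: "(real r - 1) * real s \<le> real r * (real d + 4)"
  proof -
    have "real ((r - 1) * s) \<le> real (r * (d + 4))" using key by (simp only: of_nat_le_iff)
    thus ?thesis using r0 by (simp add: of_nat_diff)
  qed
  have rpos: "real r > 0" using r0 by simp
  have h5: "real s - real s / real r \<le> real d + 4"
  proof -
    have "real s - real s / real r = (real r - 1) * real s / real r"
      using rpos by (simp add: field_simps)
    also have "\<dots> \<le> real d + 4" using h4 rpos by (simp add: pos_divide_le_eq mult.commute)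
    finally show ?thesis .
  qed
  have "(1 - 1 / real r) * (real q - real l)
      = (real r - 1) * (real m - real t) - real s + real s / real r"
    using rpos h2 h3 by (simp add: field_simps)
  hence "real hw \<le> (1 - 1 / real r) * (real q - real l) + 5"
    using h1 h5 by (simp add: algebra_simps)
  thus ?thesis using dist unfolding q_def by linarith
qed

end
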